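(* Let $G$ be a Lie group and $(\pi,V)$ a continuous representation of $G$ on a finite-dimensional real vector space $V$ equipped with an inner product. Let $F\subseteq G$ be a relatively compact symmetric subset ($F=F^{-1}$), and let $\rho:=\sup_{g\in F}\|\pi(g)\|$ (operator norm). Then $\delta^V_F\geq \rho^{-\dim(V)}$.
   Context: Let $\Lambda$ be Lebesgue measure on $V$. For a relatively compact $F\subseteq G$ and a relatively compact open neighbourhood $U$ of $0\in V$, $\delta^V_F(U):=\Lambda\big(\bigcap_{g\in F}\pi(g)(U)\big)/\Lambda(U)$. For a neighbourhood basis $\mathcal{V}$ of $0$ consisting of relatively compact symmetric ($U=-U$) open sets, $\delta^V_F(\mathcal{V}):=\liminf_{U\in\mathcal{V}}\delta^V_F(U)$, and $\delta^V_F$ is the supremum of $\delta^V_F(\mathcal{V})$ over all such neighbourhood bases. *)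

theory Defs
  imports "HOL-Analysis.Analysis" "HOL-Algebra.Group"
begin

text \<open>G: a Hausdorff, locally compact topological group (stand-in for a Lie group),
  given as a HOL-Algebra group together with a topology on its carrier.\<close>
definition lc_topological_group :: "('g, 'b) monoid_scheme \<Rightarrow> 'g topology \<Rightarrow> bool" where
  "lc_topological_group G T \<longleftrightarrow>
     group G \<and> topspace T = carrier G \<and>
     continuous_map (prod_topology T T) T (\<lambda>(x, y). x \<otimes>\<^bsub>G\<^esub> y) \<and>
     continuous_map T T (\<lambda>x. inv\<^bsub>G\<^esub> x) \<and>
     Hausdorff_space T \<and> locally_compact_space T"

definition continuous_rep ::
  "('g, 'b) monoid_scheme \<Rightarrow> 'g topology \<Rightarrow> ('g \<Rightarrow> 'v::euclidean_space \<Rightarrow> 'v) \<Rightarrow> bool" where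
  "continuous_rep G T \<pi> \<longleftrightarrow>
     (\<forall>g\<in>carrier G. linear (\<pi> g)) \<and>
     (\<forall>g\<in>carrier G. \<forall>h\<in>carrier G. \<pi> (g \<otimes>\<^bsub>G\<^esub> h) = \<pi> g \<circ> \<pi> h) \<and>
     \<pi> \<one>\<^bsub>G\<^esub> = id \<and>
     continuous_map (prod_topology T euclidean) euclidean (\<lambda>(g, v). \<pi> g v)"

definition Lambda :: "'v::euclidean_space set \<Rightarrow> ennreal" where
  "Lambda S = (INF A \<in> {A \<in> sets lebesgue. S \<subseteq> A}. emeasure lebesgue A)"

definition delta_U :: "('g \<Rightarrow> 'v::euclidean_space \<Rightarrow> 'v) \<Rightarrow> 'g set \<Rightarrow> 'v set \<Rightarrow> ennreal" where
  "delta_U \<pi> F U = Lambda (\<Inter>g\<in>F. \<pi> g ` U) / Lambda U"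

definition good_nbhd_basis :: "'v::euclidean_space set set \<Rightarrow> bool" where
  "good_nbhd_basis \<V> \<longleftrightarrow>
     (\<forall>U\<in>\<V>. open U \<and> 0 \<in> U \<and> compact (closure U) \<and> uminus ` U = U) \<and>
     (\<forall>W. open W \<and> 0 \<in> W \<longrightarrow> (\<exists>U\<in>\<V>. U \<subseteq> W))"

text \<open>liminf over the basis directed by reverse inclusion.\<close>
definition delta_basis :: "('g \<Rightarrow> 'v::euclidean_space \<Rightarrow> 'v) \<Rightarrow> 'g set \<Rightarrow> 'v set set \<Rightarrow> ennreal" where
  "delta_basis \<pi> F \<V> = (SUP U0\<in>\<V>. INF U\<in>{U \<in> \<V>. U \<subseteq> U0}. delta_U \<pi> F U)"

definition delta :: "('g \<Rightarrow> 'v::euclidean_space \<Rightarrow> 'v) \<Rightarrow> 'g set \<Rightarrow> ennreal" where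
  "delta \<pi> F = (SUP \<V>\<in>{\<V>. good_nbhd_basis \<V>}. delta_basis \<pi> F \<V>)"

end

theory Submission
  imports Defs
begin

lemma Lambda_mono: "S \<subseteq> S' \<Longrightarrow> Lambda S \<le> Lambda S'"
  unfolding Lambda_def by (rule INF_mono) auto

lemma Lambda_meas: "S \<in> sets lebesgue \<Longrightarrow> Lambda S = emeasure lebesgue S"
  unfolding Lambda_def
proof (rule antisym)
  assume S: "S \<in> sets lebesgue"
  show "(INF A \<in> {A \<in> sets lebesgue. S \<subseteq> A}. emeasure lebesgue A) \<le> emeasure lebesgue S"
    by (rule INF_lower) (use S in simp)
  show "emeasure lebesgue S \<le> (INF A \<in> {A \<in> sets lebesgue. S \<subseteq> A}. emeasure lebesgue A)"
  proof (rule INF_greatest)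
    fix A assume "A \<in> {A \<in> sets lebesgue. S \<subseteq> A}"
    then show "emeasure lebesgue S \<le> emeasure lebesgue A" using emeasure_mono by blast
  qed
qed

lemma Lambda_ball:
  assumes "r \<ge> 0"
  shows "Lambda (ball (0::'v::euclidean_space) r) = ennreal (r ^ DIM('v) * measure lborel (ball (0::'v) 1))"
proof -
  have "Lambda (ball (0::'v) r) = emeasure lebesgue (ball (0::'v) r)"
    by (rule Lambda_meas) auto
  also have "\<dots> = ennreal (measure lborel (ball (0::'v) r))"
    using emeasure_lborel_ball_finite[of "0::'v" r] by (subst emeasure_eq_ennreal_measure) auto
  finally show ?thesis using content_ball_conv_unit_ball[OF assms, of "0::'v"] by simp
qed

lemma onorm_bound_from_ball:
  fixes f :: "'v::euclidean_space \<Rightarrow> 'v"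
  assumes "linear f" "\<And>v. norm v \<le> 1 \<Longrightarrow> norm (f v) \<le> B"
  shows "onorm f \<le> B"
proof (rule onorm_le)
  fix x :: 'v
  show "norm (f x) \<le> B * norm x"
  proof (cases "x = 0")
    case True
    then show ?thesis using linear_0[OF assms(1)] by simp
  next
    case False
    have "norm (f (x /\<^sub>R norm x)) \<le> B" by (rule assms(2)) (simp add: False)
    moreover have "f (x /\<^sub>R norm x) = inverse (norm x) *\<^sub>R f x"
      using linear_scale[OF assms(1), of "inverse (norm x)" x] by simp
    ultimately have "norm (f x) / norm x \<le> B" using False by (simp add: divide_inverse mult.commute)
    then show ?thesis using False by (simp add: divide_le_eq mult.commute)
  qed
qed

theorem mainTheorem2:
  fixes G :: "('g, 'b) monoid_scheme" and T :: "'g topology"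
    and \<pi> :: "'g \<Rightarrow> 'v::euclidean_space \<Rightarrow> 'v" and F :: "'g set"
  assumes "lc_topological_group G T"
    and "continuous_rep G T \<pi>"
    and "F \<subseteq> carrier G"
    and "compactin T (T closure_of F)"
    and "(\<lambda>g. inv\<^bsub>G\<^esub> g) ` F = F"
  shows "delta \<pi> F \<ge> ennreal (1 / ((SUP g\<in>F. onorm (\<pi> g)) ^ DIM('v)))"
proof -
  define x where "x = ennreal (1 / ((SUP g\<in>F. onorm (\<pi> g)) ^ DIM('v)))"
  define V where "V = {ball (0::'v) r | r. r > 0}"
  have grp: "group G" using assms(1) unfolding lc_topological_group_def by simp
  have lin: "\<And>g. g \<in> carrier G \<Longrightarrow> linear (\<pi> g)"
    and mul: "\<And>g h. g \<in> carrier G \<Longrightarrow> h \<in> carrier G \<Longrightarrow> \<pi> (g \<otimes>\<^bsub>G\<^esub> h) = \<pi> g \<circ> \<pi> h"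
    and one: "\<pi> \<one>\<^bsub>G\<^esub> = id"
    and cont: "continuous_map (prod_topology T euclidean) euclidean (\<lambda>(g, v). \<pi> g v)"
    using assms(2) unfolding continuous_rep_def by auto
  have inv_id: "\<pi> g (\<pi> (inv\<^bsub>G\<^esub> g) v) = v" if "g \<in> carrier G" for g v
  proof -
    have "\<pi> (g \<otimes>\<^bsub>G\<^esub> inv\<^bsub>G\<^esub> g) v = v" using grp that one by (simp add: group.r_inv)
    then show ?thesis using mul[of g "inv\<^bsub>G\<^esub> g"] that grp by (simp add: group.inv_closed)
  qed
  have goodV: "good_nbhd_basis V"
    unfolding good_nbhd_basis_def V_def
  proof (intro conjI ballI allI impI)
    fix U assume "U \<in> {ball (0::'v) r |r. 0 < r}"
    then obtain r where r: "r > 0" "U = ball 0 r" by auto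
    show "open U" "0 \<in> U" "compact (closure U)" using r by auto
    show "uminus ` U = U"
    proof
      show "uminus ` U \<subseteq> U" using r by auto
      show "U \<subseteq> uminus ` U"
      proof
        fix y assume "y \<in> U" then have "-y \<in> U" using r by auto
        then show "y \<in> uminus ` U" by (metis image_eqI minus_minus)
      qed
    qed
  next
    fix W :: "'v set" assume "open W \<and> 0 \<in> W"
    then obtain e where "e > 0" "ball 0 e \<subseteq> W" using open_contains_ball by blast
    then show "\<exists>U\<in>{ball 0 r |r. 0 < r}. U \<subseteq> W" by blast
  qed
  have key: "delta_U \<pi> F (ball 0 r) \<ge> x" if r: "r > 0" for r
  proof (cases "F = {}")
    case True
    have "Lambda (UNIV::'v set) = \<infinity>"
      using Lambda_meas[of "UNIV::'v set"] by simp
    moreover have "Lambda (ball (0::'v) r) < \<infinity>" using Lambda_ball[where 'v='v, of r] r by simp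
    ultimately have "delta_U \<pi> F (ball 0 r) = \<infinity>"
      unfolding delta_U_def using True by (simp add: ennreal_divide_eq_top_iff less_top)
    then show ?thesis by simp
  next
    case False
    have "bounded ((\<lambda>(g, v). \<pi> g v) ` ((T closure_of F) \<times> cball 0 1))"
    proof -
      have "compactin (prod_topology T euclidean) ((T closure_of F) \<times> cball (0::'v) 1)"
        using assms(4) by (simp add: compactin_Times)
      from image_compactin[OF this cont] show ?thesis by (simp add: compact_imp_bounded)
    qed
    then obtain B where B: "\<And>y. y \<in> (\<lambda>(g, v). \<pi> g v) ` ((T closure_of F) \<times> cball 0 1) \<Longrightarrow> norm y \<le> B"
      unfolding bounded_iff by blast
    have Fsub: "F \<subseteq> T closure_of F"
      using assms(1,3) unfolding lc_topological_group_def by (simp add: closure_of_subset)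
    have onB: "onorm (\<pi> g) \<le> B" if "g \<in> F" for g
      by (rule onorm_bound_from_ball) (use that assms(3) lin Fsub B in force)+
    have bdd: "bdd_above ((\<lambda>g. onorm (\<pi> g)) ` F)" using onB by (intro bdd_aboveI[where M=B]) auto
    define \<rho> where "\<rho> = (SUP g\<in>F. onorm (\<pi> g))"
    have le\<rho>: "onorm (\<pi> g) \<le> \<rho>" if "g \<in> F" for g
      unfolding \<rho>_def using cSUP_upper[OF that bdd] .
    obtain g0 where g0: "g0 \<in> F" using False by blast
    have g0c: "g0 \<in> carrier G" using g0 assms(3) by auto
    obtain b :: 'v where "b \<noteq> 0" using nonzero_Basis by blast
    then have "\<pi> g0 (\<pi> (inv\<^bsub>G\<^esub> g0) b) \<noteq> 0" using inv_id[OF g0c] by simp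
    then have "0 < onorm (\<pi> g0)"
      using onorm_pos_lt[OF linear_conv_bounded_linear[THEN iffD1, OF lin[OF g0c]]] by blast
    then have rpos: "\<rho> > 0" using le\<rho>[OF g0] by simp
    have sub: "ball 0 (r / \<rho>) \<subseteq> (\<Inter>g\<in>F. \<pi> g ` ball 0 r)"
    proof (intro subsetI INT_I)
      fix v g assume v: "v \<in> ball (0::'v) (r / \<rho>)" and g: "g \<in> F"
      have gc: "g \<in> carrier G" using g assms(3) by auto
      have ig: "inv\<^bsub>G\<^esub> g \<in> F" using g assms(5) by blast
      have igc: "inv\<^bsub>G\<^esub> g \<in> carrier G" using ig assms(3) by auto
      have "norm (\<pi> (inv\<^bsub>G\<^esub> g) v) \<le> onorm (\<pi> (inv\<^bsub>G\<^esub> g)) * norm v"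
        using onorm linear_conv_bounded_linear lin[OF igc] by blast
      also have "\<dots> \<le> \<rho> * norm v" using le\<rho>[OF ig] by (simp add: mult_right_mono)
      also have "\<dots> < r" using v rpos by (simp add: field_simps)
      finally have "\<pi> (inv\<^bsub>G\<^esub> g) v \<in> ball 0 r" by simp
      then show "v \<in> \<pi> g ` ball 0 r" using inv_id[OF gc, of v] by (metis image_eqI)
    qed
    define K where "K = measure lborel (ball (0::'v) 1)"
    have K: "K > 0" unfolding K_def by (rule content_ball_pos) simp
    have "x = ennreal ((r / \<rho>) ^ DIM('v) * K) / ennreal (r ^ DIM('v) * K)"
      unfolding x_def \<rho>_def[symmetric] using K r rpos
      by (subst divide_ennreal) (auto simp: power_divide field_simps)
    also have "\<dots> = Lambda (ball (0::'v) (r / \<rho>)) / Lambda (ball (0::'v) r)"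
    proof -
      have nn: "0 \<le> r / \<rho>" using r rpos by simp
      have e2: "Lambda (ball (0::'v) (r / \<rho>)) = ennreal ((r / \<rho>) ^ DIM('v) * K)"
        unfolding K_def by (rule Lambda_ball[OF nn])
      have e1: "Lambda (ball (0::'v) r) = ennreal (r ^ DIM('v) * K)"
        unfolding K_def by (rule Lambda_ball) (use r in simp)
      show ?thesis by (simp only: e1 e2)
    qed
    also have "\<dots> \<le> delta_U \<pi> F (ball 0 r)"
      unfolding delta_U_def by (rule divide_right_mono_ennreal, rule Lambda_mono[OF sub])
    finally show ?thesis .
  qed
  have "x \<le> delta_basis \<pi> F V"
  proof -
    have b1: "ball (0::'v) 1 \<in> V" unfolding V_def by auto
    have "x \<le> (INF U\<in>{U \<in> V. U \<subseteq> ball 0 1}. delta_U \<pi> F U)"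
      by (rule INF_greatest) (use key in \<open>auto simp: V_def\<close>)
    also have "\<dots> \<le> delta_basis \<pi> F V" unfolding delta_basis_def by (rule SUP_upper[OF b1])
    finally show ?thesis .
  qed
  also have "\<dots> \<le> delta \<pi> F" unfolding delta_def by (rule SUP_upper) (use goodV in simp)
  finally show ?thesis unfolding x_def .
qed

end
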